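(* Let $k>t$ and $n>2k-t$, and let $\Gamma$ be a $(t+2)$-space in $\mathrm{PG}(n,q)$. Let $\mathcal{S}$ be the set of all $k$-spaces of $\mathrm{PG}(n,q)$ meeting $\Gamma$ in at least a $(t+1)$-space. Then $\mathcal{S}$ is a maximal set of $k$-spaces pairwise intersecting in at least a $t$-space, and \[|\mathcal{S}|=\left[{n-t-2\atop k-t-2}\right]_q\left(1+\theta_{t+2}q^{k-t-1}\frac{q^{n-k}-1}{q^{k-t-1}-1}\right).\]
   Context: $k$-spaces are projective subspaces of dimension $k$; "intersecting in at least a $t$-space" means the intersection has projective dimension at least $t$. Maximal means no further $k$-space can be added while keeping the property. $\left[{n\atop k}\right]_q=\frac{(q^n-1)\cdots(q^{n-k+1}-1)}{(q^k-1)\cdots(q-1)}$ for $k>0$, $=1$ for $k=0$; $\theta_m=\frac{q^{m+1}-1}{q-1}$. *)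

theory Defs
  imports "HOL-Analysis.Analysis"
begin

text \<open>PG(n,q) is modelled by the vector space 'a^'m over the finite field 'a
  (q = CARD('a)), with CARD('m) = n+1. A projective k-space is a vector
  subspace of (vector) dimension k+1.\<close>

definition pspace :: "nat \<Rightarrow> ('a::field ^ 'm) set \<Rightarrow> bool" where
  "pspace k S \<longleftrightarrow> vec.subspace S \<and> vec.dim S = k + 1"

definition meets_in_at_least :: "nat \<Rightarrow> ('a::field ^ 'm) set \<Rightarrow> ('a ^ 'm) set \<Rightarrow> bool" where
  "meets_in_at_least t S T \<longleftrightarrow> vec.dim (S \<inter> T) \<ge> t + 1"

definition t_intersecting :: "nat \<Rightarrow> nat \<Rightarrow> ('a::field ^ 'm) set set \<Rightarrow> bool" where
  "t_intersecting k t F \<longleftrightarrow> (\<forall>S\<in>F. pspace k S) \<and>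
     (\<forall>S\<in>F. \<forall>T\<in>F. meets_in_at_least t S T)"

definition maximal_t_intersecting :: "nat \<Rightarrow> nat \<Rightarrow> ('a::field ^ 'm) set set \<Rightarrow> bool" where
  "maximal_t_intersecting k t F \<longleftrightarrow> t_intersecting k t F \<and>
     (\<forall>K. pspace k K \<and> K \<notin> F \<longrightarrow> \<not> t_intersecting k t (insert K F))"

definition qbinom :: "real \<Rightarrow> nat \<Rightarrow> nat \<Rightarrow> real" where
  "qbinom q n k = (if k = 0 then 1
     else (\<Prod>i<k. (q ^ (n - i) - 1)) / (\<Prod>i<k. (q ^ (k - i) - 1)))"

definition theta :: "real \<Rightarrow> nat \<Rightarrow> real" where
  "theta q m = (q ^ (m + 1) - 1) / (q - 1)"

end

theory Submission
  imports Defs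
begin



lemma card_span_insert:
  fixes x :: "'a::{finite,field} ^ 'm" and B :: "('a ^ 'm) set"
  assumes "x \<notin> vec.span B"
  shows "card (vec.span (insert x B)) = CARD('a) * card (vec.span B)"
proof -
  have "bij_betw (\<lambda>(c,y). c *s x + y) ((UNIV::'a set) \<times> vec.span B) (vec.span (insert x B))"
  proof (rule bij_betwI')
    fix p p' assume p: "p \<in> (UNIV::'a set) \<times> vec.span B" and p': "p' \<in> (UNIV::'a set) \<times> vec.span B"
    obtain c y where cy: "p = (c,y)" by force
    obtain c' y' where cy': "p' = (c',y')" by force
    show "((\<lambda>(c,y). c *s x + y) p = (\<lambda>(c,y). c *s x + y) p') = (p = p')"
    proof
      assume eq: "(\<lambda>(c,y). c *s x + y) p = (\<lambda>(c,y). c *s x + y) p'"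
      then have e: "c *s x + y = c' *s x + y'" using cy cy' by simp
      have "(c - c') *s x = y' - y" using e by (simp add: algebra_simps vector_sub_rdistrib)
      moreover have "y' - y \<in> vec.span B" using p p' cy cy' by (simp add: vec.span_diff)
      ultimately have cx: "(c - c') *s x \<in> vec.span B" by simp
      have "c = c'"
      proof (rule ccontr)
        assume "c \<noteq> c'"
        then have "x = inverse (c - c') *s ((c - c') *s x)" by (simp only: vec.scale_scale) simp
        also have "\<dots> \<in> vec.span B" using \<open>(c - c') *s x \<in> vec.span B\<close> by (rule vec.span_scale)
        finally show False using assms by simp
      qed
      then show "p = p'" using e cy cy' by simp
    qed simp
  next
    fix p assume "p \<in> (UNIV::'a set) \<times> vec.span B"
    then obtain c y where "p = (c,y)" "y \<in> vec.span B" by force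
    then show "(\<lambda>(c,y). c *s x + y) p \<in> vec.span (insert x B)"
      by (simp add: vec.span_add vec.span_scale vec.span_base vec.span_mono[of B "insert x B", THEN subsetD] subset_insertI)
  next
    fix z assume "z \<in> vec.span (insert x B)"
    then obtain c where "z - c *s x \<in> vec.span B" by (auto simp: vec.span_insert)
    then show "\<exists>p\<in>(UNIV::'a set) \<times> vec.span B. z = (\<lambda>(c,y). c *s x + y) p"
      by (intro bexI[of _ "(c, z - c *s x)"]) auto
  qed
  then have "card (vec.span (insert x B)) = card ((UNIV::'a set) \<times> vec.span B)"
    by (simp add: bij_betw_same_card)
  then show ?thesis by (simp add: card_cartesian_product)
qed

lemma card_span_indep:
  fixes B :: "('a::{finite,field} ^ 'm) set"
  assumes "vec.independent B"
  shows "card (vec.span B) = CARD('a) ^ card B"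
proof -
  have "finite B" using assms vec.finiteI_independent by blast
  then show ?thesis using assms
  proof (induction B rule: finite_induct)
    case empty then show ?case by simp
  next
    case (insert x F)
    then have "vec.independent F" "x \<notin> vec.span F"
      by (auto simp: vec.independent_insert)
    then show ?case using insert card_span_insert[of x F] by simp
  qed
qed

lemma card_subspace:
  fixes S :: "('a::{finite,field} ^ 'm) set"
  assumes "vec.subspace S"
  shows "card S = CARD('a) ^ vec.dim S"
proof -
  obtain B where B: "B \<subseteq> S" "vec.independent B" "S \<subseteq> vec.span B" "card B = vec.dim S"
    using vec.basis_exists[of S] by blast
  have "vec.span B = S" using B assms by (simp add: vec.span_subspace)
  then show ?thesis using card_span_indep[OF B(2)] B(4) by simp
qed

lemma dim_Un_Int:
  fixes S T :: "('a::field ^ 'm) set"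
  assumes "vec.subspace S" "vec.subspace T"
  shows "vec.dim (S \<union> T) + vec.dim (S \<inter> T) = vec.dim S + vec.dim T"
proof -
  have "vec.span (S \<union> T) = {x + y |x y. x \<in> S \<and> y \<in> T}"
  proof -
    have e: "vec.span S = S" "vec.span T = T" using assms by (auto intro: vec.span_subspace)
    show ?thesis using vec.span_Un[of S T] unfolding e .
  qed
  then have "vec.dim (S \<union> T) = vec.dim {x + y |x y. x \<in> S \<and> y \<in> T}"
    by (metis vec.dim_span)
  then show ?thesis using vec.dim_sums_Int[OF assms] by simp
qed



fun LT :: "('a::field ^ 'm) set \<Rightarrow> ('a ^ 'm) set \<Rightarrow> nat \<Rightarrow> ('a ^ 'm) list set" where
  "LT V W 0 = {[]}"
| "LT V W (Suc r) = (\<lambda>(xs,x). xs @ [x]) ` (SIGMA xs:LT V W r. V - vec.span (W \<union> set xs))"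

lemma LT_props:
  "xs \<in> LT V W r \<Longrightarrow> length xs = r \<and> set xs \<subseteq> V \<and> vec.dim (W \<union> set xs) = vec.dim W + r"
proof (induction r arbitrary: xs)
  case 0 then show ?case by simp
next
  case (Suc r)
  then obtain ys x where ys: "ys \<in> LT V W r" "x \<in> V" "x \<notin> vec.span (W \<union> set ys)" "xs = ys @ [x]"
    by auto
  have "W \<union> set xs = insert x (W \<union> set ys)" using ys by auto
  then have "vec.dim (W \<union> set xs) = vec.dim (W \<union> set ys) + 1"
    using ys(3) by (simp add: vec.dim_insert)
  then show ?case using Suc.IH[OF ys(1)] ys by auto
qed

lemma LT_finite: "finite (LT (V :: ('a::{finite,field} ^ 'm) set) W r)"
  by (induction r) auto

lemma LT_card:
  fixes V W :: "('a::{finite,field} ^ 'm) set"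
  assumes "vec.subspace V" "W \<subseteq> V" "vec.dim W + r \<le> vec.dim V"
  shows "card (LT V W r) = (\<Prod>i<r. CARD('a) ^ vec.dim V - CARD('a) ^ (vec.dim W + i))"
  using assms(3)
proof (induction r)
  case 0 then show ?case by simp
next
  case (Suc r)
  let ?f = "\<lambda>(xs,x). xs @ [x]"
  let ?S = "SIGMA xs:LT V W r. V - vec.span (W \<union> set xs)"
  have inj: "inj_on ?f ?S" by (auto simp: inj_on_def)
  have c: "card (V - vec.span (W \<union> set xs)) = CARD('a) ^ vec.dim V - CARD('a) ^ (vec.dim W + r)"
    if xs: "xs \<in> LT V W r" for xs
  proof -
    have p: "set xs \<subseteq> V" "vec.dim (W \<union> set xs) = vec.dim W + r" using LT_props[OF xs] by auto
    have sub: "vec.span (W \<union> set xs) \<subseteq> V"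
      using p assms by (simp add: vec.span_minimal)
    have "card (V - vec.span (W \<union> set xs)) = card V - card (vec.span (W \<union> set xs))"
      using sub by (simp add: card_Diff_subset)
    also have "\<dots> = CARD('a) ^ vec.dim V - CARD('a) ^ (vec.dim W + r)"
      using card_subspace[OF assms(1)] card_subspace[OF vec.subspace_span, of "W \<union> set xs"] p
      by simp
    finally show ?thesis .
  qed
  have "card (LT V W (Suc r)) = card ?S" using card_image[OF inj] by simp
  also have "\<dots> = (\<Sum>xs\<in>LT V W r. card (V - vec.span (W \<union> set xs)))"
    by (rule card_SigmaI) (simp_all add: LT_finite)
  also have "\<dots> = (\<Sum>xs\<in>LT V W r. CARD('a) ^ vec.dim V - CARD('a) ^ (vec.dim W + r))"
    by (rule sum.cong) (simp_all add: c)
  also have "\<dots> = card (LT V W r) * (CARD('a) ^ vec.dim V - CARD('a) ^ (vec.dim W + r))"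
    by simp
  finally show ?case using Suc by simp
qed

lemma LT_sub:
  assumes "S \<subseteq> V"
  shows "LT S W r = {xs \<in> LT V W r. set xs \<subseteq> S}"
proof (induction r)
  case 0 then show ?case by auto
next
  case (Suc r)
  show ?case
  proof
    show "LT S W (Suc r) \<subseteq> {xs \<in> LT V W (Suc r). set xs \<subseteq> S}"
      using Suc assms by auto
    show "{xs \<in> LT V W (Suc r). set xs \<subseteq> S} \<subseteq> LT S W (Suc r)"
    proof
      fix zs assume "zs \<in> {xs \<in> LT V W (Suc r). set xs \<subseteq> S}"
      then obtain ys x where ys: "ys \<in> LT V W r" "x \<in> V" "x \<notin> vec.span (W \<union> set ys)" "zs = ys @ [x]"
        "set zs \<subseteq> S" by auto
      then have "ys \<in> LT S W r" using Suc by auto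
      then show "zs \<in> LT S W (Suc r)" using ys by auto
    qed
  qed
qed

lemma count_nat:
  fixes V W :: "('a::{finite,field} ^ 'm) set"
  assumes V: "vec.subspace V" and W: "vec.subspace W" and WV: "W \<subseteq> V"
    and r: "vec.dim W + r \<le> vec.dim V"
  shows "card {S. vec.subspace S \<and> W \<subseteq> S \<and> S \<subseteq> V \<and> vec.dim S = vec.dim W + r}
      * (\<Prod>i<r. CARD('a) ^ (vec.dim W + r) - CARD('a) ^ (vec.dim W + i))
    = (\<Prod>i<r. CARD('a) ^ vec.dim V - CARD('a) ^ (vec.dim W + i))"
proof -
  define Fam where "Fam = {S. vec.subspace S \<and> W \<subseteq> S \<and> S \<subseteq> V \<and> vec.dim S = vec.dim W + r}"
  define A where "A S = {xs \<in> LT V W r. vec.span (W \<union> set xs) = S}" for S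
  have finFam: "finite Fam" by (rule finite_subset[of _ UNIV]) auto
  have AS: "A S = LT S W r" if S: "S \<in> Fam" for S
  proof
    show "A S \<subseteq> LT S W r"
    proof
      fix xs assume "xs \<in> A S"
      then have xs: "xs \<in> LT V W r" "vec.span (W \<union> set xs) = S" by (auto simp: A_def)
      then have "set xs \<subseteq> S" using vec.span_superset by blast
      then show "xs \<in> LT S W r" using LT_sub[of S V W r] S xs by (auto simp: Fam_def)
    qed
    show "LT S W r \<subseteq> A S"
    proof
      fix xs assume xs: "xs \<in> LT S W r"
      have SV: "S \<subseteq> V" "vec.subspace S" "W \<subseteq> S" "vec.dim S = vec.dim W + r"
        using S by (auto simp: Fam_def)
      have xsV: "xs \<in> LT V W r" "set xs \<subseteq> S" using xs LT_sub[OF SV(1), of W r] by auto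
      have sub: "vec.span (W \<union> set xs) \<subseteq> S" using SV xsV by (simp add: vec.span_minimal)
      have "vec.dim (vec.span (W \<union> set xs)) = vec.dim W + r" using LT_props[OF xs] by simp
      then have "vec.span (W \<union> set xs) = S"
        using vec.subspace_dim_equal[OF vec.subspace_span SV(2) sub] SV(4) by simp
      then show "xs \<in> A S" using xsV by (simp add: A_def)
    qed
  qed
  have U: "LT V W r = (\<Union>S\<in>Fam. A S)"
  proof
    show "LT V W r \<subseteq> (\<Union>S\<in>Fam. A S)"
    proof
      fix xs assume xs: "xs \<in> LT V W r"
      have p: "set xs \<subseteq> V" "vec.dim (W \<union> set xs) = vec.dim W + r" using LT_props[OF xs] by auto
      have "vec.span (W \<union> set xs) \<in> Fam"
        unfolding Fam_def using p V WV
        by (auto simp: vec.span_minimal vec.subspace_span vec.span_superset[THEN subsetD])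
      then show "xs \<in> (\<Union>S\<in>Fam. A S)" using xs by (auto simp: A_def)
    qed
  qed (auto simp: A_def)
  have "card (LT V W r) = (\<Sum>S\<in>Fam. card (A S))"
    unfolding U by (rule card_UN_disjoint) (auto simp: finFam A_def LT_finite)
  also have "\<dots> = (\<Sum>S\<in>Fam. (\<Prod>i<r. CARD('a) ^ (vec.dim W + r) - CARD('a) ^ (vec.dim W + i)))"
  proof (rule sum.cong)
    fix S assume S: "S \<in> Fam"
    then have SV: "vec.subspace S" "W \<subseteq> S" "vec.dim S = vec.dim W + r" by (auto simp: Fam_def)
    show "card (A S) = (\<Prod>i<r. CARD('a) ^ (vec.dim W + r) - CARD('a) ^ (vec.dim W + i))"
      using AS[OF S] LT_card[OF SV(1) SV(2), of r] SV(3) by simp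
  qed simp
  finally show ?thesis using LT_card[OF V WV r] by (simp add: Fam_def)
qed

lemma real_pow_diff:
  assumes "b \<le> a" "(q::nat) \<ge> 1"
  shows "real (q ^ a - q ^ b) = real q ^ b * (real q ^ (a - b) - 1)"
proof -
  have "q ^ b \<le> q ^ a" using assms by (simp add: power_increasing)
  then have "real (q ^ a - q ^ b) = real q ^ a - real q ^ b" by (simp add: of_nat_diff)
  also have "real q ^ a = real q ^ b * real q ^ (a - b)" using assms by (simp add: power_add[symmetric])
  finally show ?thesis by (simp add: algebra_simps)
qed

lemma card_field_ge2: "CARD('a::{finite,field}) \<ge> 2"
proof -
  have "{0::'a, 1} \<subseteq> UNIV" by simp
  then have "card {0::'a, 1} \<le> CARD('a)" by (intro card_mono) simp_all
  then show ?thesis by simp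
qed

lemma count_real:
  fixes V W :: "('a::{finite,field} ^ 'm) set"
  assumes V: "vec.subspace V" and W: "vec.subspace W" and WV: "W \<subseteq> V"
    and r: "vec.dim W + r \<le> vec.dim V"
  shows "real (card {S. vec.subspace S \<and> W \<subseteq> S \<and> S \<subseteq> V \<and> vec.dim S = vec.dim W + r})
    = qbinom (real CARD('a)) (vec.dim V - vec.dim W) r"
proof -
  let ?q = "CARD('a)" and ?Q = "real CARD('a)"
  let ?w = "vec.dim W" and ?N = "vec.dim V"
  let ?c = "card {S. vec.subspace S \<and> W \<subseteq> S \<and> S \<subseteq> V \<and> vec.dim S = vec.dim W + r}"
  have q1: "?q \<ge> 1" using card_field_ge2[where 'a='a] by simp
  have Q2: "?Q \<ge> 2" using card_field_ge2[where 'a='a] by simp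
  have e: "real ?c * (\<Prod>i<r. real (?q ^ (?w + r) - ?q ^ (?w + i)))
      = (\<Prod>i<r. real (?q ^ ?N - ?q ^ (?w + i)))"
    using arg_cong[OF count_nat[OF V W WV r], of real] by simp
  have e1: "(\<Prod>i<r. real (?q ^ (?w + r) - ?q ^ (?w + i)))
     = (\<Prod>i<r. ?Q ^ (?w + i)) * (\<Prod>i<r. ?Q ^ (r - i) - 1)"
    by (subst prod.distrib[symmetric], rule prod.cong) (use q1 in \<open>auto simp: real_pow_diff\<close>)
  have e2: "(\<Prod>i<r. real (?q ^ ?N - ?q ^ (?w + i)))
     = (\<Prod>i<r. ?Q ^ (?w + i)) * (\<Prod>i<r. ?Q ^ (?N - ?w - i) - 1)"
    by (subst prod.distrib[symmetric], rule prod.cong) (use q1 r in \<open>auto simp: real_pow_diff\<close>)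
  have nz1: "(\<Prod>i<r. ?Q ^ (?w + i)) \<noteq> 0" using Q2 by (simp add: prod_zero_iff)
  have nz2: "(\<Prod>i<r. ?Q ^ (r - i) - 1) \<noteq> 0"
  proof -
    have "?Q ^ (r - i) - 1 \<noteq> 0" if "i < r" for i
    proof -
      have "?Q ^ (r - i) \<ge> ?Q ^ 1" using Q2 that by (intro power_increasing) auto
      then have "?Q ^ (r - i) \<ge> 2" using Q2 by (simp only: power_one_right)
      then show ?thesis by linarith
    qed
    then show ?thesis by (simp add: prod_zero_iff)
  qed
  have "real ?c * (\<Prod>i<r. ?Q ^ (r - i) - 1) = (\<Prod>i<r. ?Q ^ (?N - ?w - i) - 1)"
    using e unfolding e1 e2 using nz1 by simp
  then have "real ?c = (\<Prod>i<r. ?Q ^ (?N - ?w - i) - 1) / (\<Prod>i<r. ?Q ^ (r - i) - 1)"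
    using nz2 by (simp add: field_simps)
  then show ?thesis by (simp add: qbinom_def)
qed



lemma exists_hyp:
  fixes G D :: "('a::field ^ 'm) set"
  assumes G: "vec.subspace G" and D: "vec.subspace D" and DG: "D \<subseteq> G"
    and dG: "vec.dim G = t + 3" and dD: "vec.dim D \<le> t + 1"
  shows "\<exists>H. vec.subspace H \<and> H \<subseteq> G \<and> vec.dim H = t + 2 \<and> vec.dim (H \<inter> D) \<le> t"
proof -
  obtain BD where BD: "BD \<subseteq> D" "vec.independent BD" "D \<subseteq> vec.span BD" "card BD = vec.dim D"
    using vec.basis_exists[of D] by blast
  obtain B where B: "BD \<subseteq> B" "B \<subseteq> G" "vec.independent B" "G \<subseteq> vec.span B"
    using vec.maximal_independent_subset_extend[of BD G] BD DG by blast
  have finB: "finite B" using B(3) vec.finiteI_independent by blast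
  have spanB: "vec.span B = G" using B G by (simp add: vec.span_subspace)
  have cardB: "card B = t + 3"
    using vec.dim_span_eq_card_independent[OF B(3)] spanB dG by simp
  obtain x where x: "x \<in> B" "BD \<noteq> {} \<Longrightarrow> x \<in> BD"
  proof (cases "BD = {}")
    case True
    then show ?thesis using that cardB by (metis card.empty ex_in_conv zero_neq_numeral add_eq_0_iff_both_eq_0)
  next
    case False
    then show ?thesis using that B(1) by blast
  qed
  define H where "H = vec.span (B - {x})"
  have indH: "vec.independent (B - {x})" using B(3) vec.independent_mono by blast
  have Hs: "vec.subspace H" by (simp add: H_def vec.subspace_span)
  have HG: "H \<subseteq> G" unfolding H_def using B(2) G by (intro vec.span_minimal) auto
  have dH: "vec.dim H = t + 2"
    unfolding H_def using vec.dim_span_eq_card_independent[OF indH] cardB finB x(1) by simp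
  have xH: "x \<notin> H"
  proof
    assume "x \<in> H"
    then have "vec.dependent B" unfolding H_def vec.dependent_def using x(1) by blast
    then show False using B(3) by simp
  qed
  have "vec.dim (H \<inter> D) \<le> t"
  proof (cases "vec.dim D \<le> t")
    case True
    then show ?thesis using vec.dim_subset[of "H \<inter> D" D] by simp
  next
    case False
    then have "card BD = t + 1" using dD BD(4) by simp
    then have "BD \<noteq> {}" by auto
    then have "x \<in> D" using x BD(1) by blast
    have e1: "vec.span (H \<inter> D) = H \<inter> D" using Hs D by (simp add: vec.span_subspace vec.subspace_inter)
    have e2: "vec.span D = D" using D by (simp add: vec.span_subspace)
    have "vec.span (H \<inter> D) \<subset> vec.span D"
      unfolding e1 e2 using xH \<open>x \<in> D\<close> by blast
    then have "vec.dim (H \<inter> D) < vec.dim D" by (rule vec.dim_psubset)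
    then show ?thesis using dD by simp
  qed
  then show ?thesis using Hs HG dH by blast
qed

lemma extend_space:
  fixes H K :: "('a::field ^ 'm) set"
  assumes H: "vec.subspace H" and K: "vec.subspace K" and r: "vec.dim H + r \<le> CARD('m)"
  shows "\<exists>K'. vec.subspace K' \<and> H \<subseteq> K' \<and> vec.dim K' = vec.dim H + r \<and>
            min CARD('m) (vec.dim (K \<union> H) + r) \<le> vec.dim (K \<union> K')"
  using r
proof (induction r)
  case 0 then show ?case using H by auto
next
  case (Suc r)
  then obtain K' where K': "vec.subspace K'" "H \<subseteq> K'" "vec.dim K' = vec.dim H + r"
    "min CARD('m) (vec.dim (K \<union> H) + r) \<le> vec.dim (K \<union> K')" by auto
  have lt: "vec.dim K' < CARD('m)" using K'(3) Suc.prems by simp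
  have spK': "vec.span K' = K'" using K'(1) by (simp add: vec.span_subspace)
  show ?case
  proof (cases "vec.span (K \<union> K') = UNIV")
    case False
    then obtain v where v: "v \<notin> vec.span (K \<union> K')" by auto
    define K'' where "K'' = vec.span (insert v K')"
    have vK': "v \<notin> vec.span K'" using v vec.span_mono[of K' "K \<union> K'"] by auto
    have d1: "vec.dim K'' = vec.dim K' + 1"
      unfolding K''_def using vK' by (simp add: vec.dim_insert)
    have "insert v (K \<union> K') \<subseteq> K \<union> K''"
      unfolding K''_def by (auto intro: vec.span_base)
    then have "vec.dim (insert v (K \<union> K')) \<le> vec.dim (K \<union> K'')" by (rule vec.dim_subset)
    then have d2: "vec.dim (K \<union> K') + 1 \<le> vec.dim (K \<union> K'')" using v by (simp add: vec.dim_insert)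
    have "H \<subseteq> K''" unfolding K''_def using K'(2) vec.span_base by blast
    then show ?thesis using d1 d2 K' unfolding K''_def
      by (intro exI[of _ K'']) (auto simp: vec.subspace_span K''_def)
  next
    case True
    have "K' \<noteq> UNIV" using lt vec_dim_card[where 'a='a and 'n='m] by auto
    then obtain v where v: "v \<notin> K'" by auto
    define K'' where "K'' = vec.span (insert v K')"
    have vK: "v \<notin> vec.span K'" unfolding spK' using v .
    have d1: "vec.dim K'' = vec.dim K' + 1"
      unfolding K''_def using vK by (simp add: vec.dim_insert)
    have "K \<union> K' \<subseteq> K \<union> K''" unfolding K''_def using vec.span_base by blast
    then have "vec.dim (K \<union> K') \<le> vec.dim (K \<union> K'')" by (rule vec.dim_subset)
    moreover have "vec.dim (K \<union> K') = CARD('m)"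
      using True vec_dim_card[where 'a='a and 'n='m] by (metis vec.dim_span)
    ultimately have d2: "CARD('m) \<le> vec.dim (K \<union> K'')" by simp
    have "H \<subseteq> K''" unfolding K''_def using K'(2) vec.span_base by blast
    then show ?thesis using d1 d2 K'
      by (intro exI[of _ K'']) (auto simp: vec.subspace_span K''_def)
  qed
qed



lemma qbinom_rec:
  "qbinom q (Suc M) (Suc r) = qbinom q M r * ((q ^ Suc M - 1) / (q ^ Suc r - 1))"
proof (cases "r = 0")
  case True then show ?thesis by (simp add: qbinom_def)
next
  case False
  have n: "(\<Prod>i<Suc r. q ^ (Suc M - i) - 1) = (q ^ Suc M - 1) * (\<Prod>i<r. q ^ (M - i) - 1)"
    by (subst prod.lessThan_Suc_shift) simp
  have d: "(\<Prod>i<Suc r. q ^ (Suc r - i) - 1) = (q ^ Suc r - 1) * (\<Prod>i<r. q ^ (r - i) - 1)"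
    by (subst prod.lessThan_Suc_shift) simp
  show ?thesis using False unfolding qbinom_def n d
    by (simp add: times_divide_times_eq mult.commute)
qed

lemma qbinom_hyp:
  assumes "(q::real) \<ge> 2"
  shows "qbinom q (Suc j) j = (q ^ Suc j - 1) / (q - 1)"
proof (induction j)
  case 0 then show ?case using assms by (simp add: qbinom_def)
next
  case (Suc j)
  have nz: "q ^ Suc j - 1 \<noteq> 0"
  proof -
    have "q ^ Suc j \<ge> q ^ 1" using assms by (intro power_increasing) auto
    then have "q ^ Suc j \<ge> 2" using assms by (simp only: power_one_right)
    then show ?thesis by linarith
  qed
  have "qbinom q (Suc (Suc j)) (Suc j) = qbinom q (Suc j) j * ((q ^ Suc (Suc j) - 1) / (q ^ Suc j - 1))"
    by (rule qbinom_rec)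
  also have "\<dots> = (q ^ Suc (Suc j) - 1) / (q - 1)"
    unfolding Suc using nz by simp
  finally show ?case .
qed



lemma part_int:
  fixes \<Gamma> :: "('a::field ^ 'm) set"
  assumes G: "pspace (t + 2) \<Gamma>"
  shows "t_intersecting k t {K. pspace k K \<and> meets_in_at_least (t + 1) K \<Gamma>}"
  unfolding t_intersecting_def
proof (intro conjI ballI)
  fix K1 K2 assume K1: "K1 \<in> {K. pspace k K \<and> meets_in_at_least (t + 1) K \<Gamma>}"
    and K2: "K2 \<in> {K. pspace k K \<and> meets_in_at_least (t + 1) K \<Gamma>}"
  have s: "vec.subspace K1" "vec.subspace K2" "vec.subspace \<Gamma>" "vec.dim \<Gamma> = t + 3"
    using K1 K2 G by (auto simp: pspace_def)
  have d: "vec.dim (K1 \<inter> \<Gamma>) \<ge> t + 2" "vec.dim (K2 \<inter> \<Gamma>) \<ge> t + 2"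
    using K1 K2 by (auto simp: meets_in_at_least_def)
  have e: "vec.dim ((K1 \<inter> \<Gamma>) \<union> (K2 \<inter> \<Gamma>)) + vec.dim ((K1 \<inter> \<Gamma>) \<inter> (K2 \<inter> \<Gamma>))
     = vec.dim (K1 \<inter> \<Gamma>) + vec.dim (K2 \<inter> \<Gamma>)"
    using s by (intro dim_Un_Int) (auto intro: vec.subspace_inter)
  have "vec.dim ((K1 \<inter> \<Gamma>) \<union> (K2 \<inter> \<Gamma>)) \<le> vec.dim \<Gamma>" by (rule vec.dim_subset) auto
  then have "vec.dim ((K1 \<inter> \<Gamma>) \<inter> (K2 \<inter> \<Gamma>)) \<ge> t + 1" using e d s by linarith
  moreover have "vec.dim ((K1 \<inter> \<Gamma>) \<inter> (K2 \<inter> \<Gamma>)) \<le> vec.dim (K1 \<inter> K2)" by (rule vec.dim_subset) auto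
  ultimately show "meets_in_at_least t K1 K2" by (simp add: meets_in_at_least_def)
qed auto

lemma part_max:
  fixes \<Gamma> :: "('a::field ^ 'm) set"
  assumes card: "CARD('m) = n + 1" and kt: "k > t" and nk: "n + t > 2 * k"
    and G: "pspace (t + 2) \<Gamma>"
  shows "maximal_t_intersecting k t {K. pspace k K \<and> meets_in_at_least (t + 1) K \<Gamma>}"
  unfolding maximal_t_intersecting_def
proof (intro conjI allI impI)
  show "t_intersecting k t {K. pspace k K \<and> meets_in_at_least (t + 1) K \<Gamma>}"
    using G by (rule part_int)
  fix K assume K: "pspace k K \<and> K \<notin> {K. pspace k K \<and> meets_in_at_least (t + 1) K \<Gamma>}"
  have Ks: "vec.subspace K" "vec.dim K = k + 1" using K by (auto simp: pspace_def)
  have Gs: "vec.subspace \<Gamma>" "vec.dim \<Gamma> = t + 3" using G by (auto simp: pspace_def)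
  have dKG: "vec.dim (K \<inter> \<Gamma>) \<le> t + 1" using K by (auto simp: meets_in_at_least_def)
  obtain H where H: "vec.subspace H" "H \<subseteq> \<Gamma>" "vec.dim H = t + 2" "vec.dim (H \<inter> (K \<inter> \<Gamma>)) \<le> t"
    using exists_hyp[OF Gs(1) vec.subspace_inter[OF Ks(1) Gs(1)] _ Gs(2) dKG] by blast
  have KH: "K \<inter> H = H \<inter> (K \<inter> \<Gamma>)" using H(2) by blast
  have eKH: "vec.dim (K \<union> H) + vec.dim (K \<inter> H) = vec.dim K + vec.dim H"
    by (rule dim_Un_Int[OF Ks(1) H(1)])
  have dKH: "vec.dim (K \<union> H) \<ge> k + 3" using eKH KH H(3,4) Ks(2) by simp
  obtain K' where K': "vec.subspace K'" "H \<subseteq> K'" "vec.dim K' = vec.dim H + (k - t - 1)"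
     "min CARD('m) (vec.dim (K \<union> H) + (k - t - 1)) \<le> vec.dim (K \<union> K')"
    using extend_space[OF H(1) Ks(1), of "k - t - 1"] H(3) card nk kt by auto
  have dK': "vec.dim K' = k + 1" using K'(3) H(3) kt by simp
  have eKK: "vec.dim (K \<union> K') + vec.dim (K \<inter> K') = vec.dim K + vec.dim K'"
    by (rule dim_Un_Int[OF Ks(1) K'(1)])
  have "vec.dim (K \<inter> K') \<le> t" using eKK K'(4) dKH dK' Ks(2) card nk kt by linarith
  then have nm: "\<not> meets_in_at_least t K K'" by (simp add: meets_in_at_least_def)
  have "vec.dim H \<le> vec.dim (K' \<inter> \<Gamma>)" using H(2) K'(2) by (intro vec.dim_subset) auto
  then have K'F: "K' \<in> {K. pspace k K \<and> meets_in_at_least (t + 1) K \<Gamma>}"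
    using K'(1) dK' H(3) by (simp add: pspace_def meets_in_at_least_def)
  show "\<not> t_intersecting k t (insert K {K. pspace k K \<and> meets_in_at_least (t + 1) K \<Gamma>})"
    unfolding t_intersecting_def using nm K'F by blast
qed

lemma part_count:
  fixes \<Gamma> :: "('a::{finite,field} ^ 'm) set"
  assumes card: "CARD('m) = n + 1" and kt: "k \<ge> t + 2" and nk: "n + t > 2 * k"
    and G: "pspace (t + 2) \<Gamma>"
  shows "real (card {K. pspace k K \<and> meets_in_at_least (t + 1) K \<Gamma>}) =
          qbinom (real CARD('a)) (n - t - 2) (k - t - 2) *
          (1 + theta (real CARD('a)) (t + 2) * real CARD('a) ^ (k - t - 1) *
               (real CARD('a) ^ (n - k) - 1) / (real CARD('a) ^ (k - t - 1) - 1))"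
proof -
  let ?Q = "real CARD('a)"
  define F where "F = {K. pspace k K \<and> meets_in_at_least (t + 1) K \<Gamma>}"
  have Gs: "vec.subspace \<Gamma>" "vec.dim \<Gamma> = t + 3" using G by (auto simp: pspace_def)
  have dU: "vec.dim (UNIV :: ('a ^ 'm) set) = n + 1" using card vec_dim_card[where 'a='a and 'n='m] by simp
  define A where "A = {K. vec.subspace K \<and> \<Gamma> \<subseteq> K \<and> K \<subseteq> UNIV \<and> vec.dim K = vec.dim \<Gamma> + (k - t - 2)}"
  define Hyp where "Hyp = {H. vec.subspace H \<and> {0} \<subseteq> H \<and> H \<subseteq> \<Gamma> \<and> vec.dim H = vec.dim {0::'a^'m} + (t + 2)}"
  define FH where "FH H = {K. vec.subspace K \<and> H \<subseteq> K \<and> K \<subseteq> UNIV \<and> vec.dim K = vec.dim H + (k - t - 1)}" for H :: "('a ^ 'm) set"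
  define CH where "CH H = FH H - A" for H
  have fin: "finite X" for X :: "('a ^ 'm) set set" by (rule finite_subset[of _ UNIV]) auto
  have Hyp_iff: "H \<in> Hyp \<longleftrightarrow> vec.subspace H \<and> H \<subseteq> \<Gamma> \<and> vec.dim H = t + 2" for H
    by (auto simp: Hyp_def vec.subspace_0)
  have A_iff: "K \<in> A \<longleftrightarrow> vec.subspace K \<and> \<Gamma> \<subseteq> K \<and> vec.dim K = k + 1" for K
    using Gs kt by (auto simp: A_def)
  have FH_iff: "K \<in> FH H \<longleftrightarrow> vec.subspace K \<and> H \<subseteq> K \<and> vec.dim K = k + 1" if "H \<in> Hyp" for H K
    using that kt by (auto simp: FH_def Hyp_iff)
  have AFH: "A \<subseteq> FH H" if "H \<in> Hyp" for H
    using that by (force simp: A_iff FH_iff Hyp_iff)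
  have FU: "F = A \<union> (\<Union>H\<in>Hyp. CH H)"
  proof
    show "F \<subseteq> A \<union> (\<Union>H\<in>Hyp. CH H)"
    proof
      fix K assume "K \<in> F"
      then have K: "vec.subspace K" "vec.dim K = k + 1" "vec.dim (K \<inter> \<Gamma>) \<ge> t + 2"
        by (auto simp: F_def pspace_def meets_in_at_least_def)
      show "K \<in> A \<union> (\<Union>H\<in>Hyp. CH H)"
      proof (cases "\<Gamma> \<subseteq> K")
        case True then show ?thesis using K by (simp add: A_iff)
      next
        case False
        have s: "vec.subspace (K \<inter> \<Gamma>)" using K Gs by (simp add: vec.subspace_inter)
        have e1: "vec.span (K \<inter> \<Gamma>) = K \<inter> \<Gamma>" using s by (simp add: vec.span_subspace)
        have e2: "vec.span \<Gamma> = \<Gamma>" using Gs by (simp add: vec.span_subspace)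
        have "vec.span (K \<inter> \<Gamma>) \<subset> vec.span \<Gamma>" unfolding e1 e2 using False by blast
        then have "vec.dim (K \<inter> \<Gamma>) < vec.dim \<Gamma>" by (rule vec.dim_psubset)
        then have "K \<inter> \<Gamma> \<in> Hyp" using K s Gs by (simp add: Hyp_iff)
        moreover have "K \<in> CH (K \<inter> \<Gamma>)"
          using K False calculation by (auto simp: CH_def FH_iff A_iff)
        ultimately show ?thesis by blast
      qed
    qed
    show "A \<union> (\<Union>H\<in>Hyp. CH H) \<subseteq> F"
    proof
      fix K assume K: "K \<in> A \<union> (\<Union>H\<in>Hyp. CH H)"
      then obtain H where H: "vec.subspace H" "H \<subseteq> K \<inter> \<Gamma>" "vec.dim H \<ge> t + 2"
        "vec.subspace K" "vec.dim K = k + 1"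
      proof
        assume "K \<in> A"
        then show ?thesis using that[of \<Gamma>] Gs by (auto simp: A_iff)
      next
        assume "K \<in> (\<Union>H\<in>Hyp. CH H)"
        then obtain H where "H \<in> Hyp" "K \<in> CH H" by blast
        then show ?thesis using that[of H] by (auto simp: CH_def FH_iff Hyp_iff)
      qed
      have "vec.dim H \<le> vec.dim (K \<inter> \<Gamma>)" using H(2) by (rule vec.dim_subset)
      then show "K \<in> F" using H by (simp add: F_def pspace_def meets_in_at_least_def)
    qed
  qed
  have disj: "CH H1 \<inter> CH H2 = {}" if "H1 \<in> Hyp" "H2 \<in> Hyp" "H1 \<noteq> H2" for H1 H2
  proof (rule ccontr)
    assume "CH H1 \<inter> CH H2 \<noteq> {}"
    then obtain K where K: "K \<in> CH H1" "K \<in> CH H2" by blast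
    have KK: "vec.subspace K" "H1 \<subseteq> K" "H2 \<subseteq> K" "\<not> \<Gamma> \<subseteq> K"
      using K that by (auto simp: CH_def FH_iff A_iff)
    have H: "vec.subspace H1" "H1 \<subseteq> \<Gamma>" "vec.dim H1 = t + 2"
      "vec.subspace H2" "H2 \<subseteq> \<Gamma>" "vec.dim H2 = t + 2" using that by (auto simp: Hyp_iff)
    have s: "vec.subspace (K \<inter> \<Gamma>)" using KK Gs by (simp add: vec.subspace_inter)
    have e1: "vec.span (K \<inter> \<Gamma>) = K \<inter> \<Gamma>" using s by (simp add: vec.span_subspace)
    have e2: "vec.span \<Gamma> = \<Gamma>" using Gs by (simp add: vec.span_subspace)
    have "vec.span (K \<inter> \<Gamma>) \<subset> vec.span \<Gamma>" unfolding e1 e2 using KK by blast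
    then have "vec.dim (K \<inter> \<Gamma>) < vec.dim \<Gamma>" by (rule vec.dim_psubset)
    then have d: "vec.dim (K \<inter> \<Gamma>) \<le> t + 2" using Gs by simp
    have "H1 = K \<inter> \<Gamma>" using vec.subspace_dim_equal[OF H(1) s] H KK d by auto
    moreover have "H2 = K \<inter> \<Gamma>" using vec.subspace_dim_equal[OF H(4) s] H KK d by auto
    ultimately show False using that by simp
  qed
  have cA: "real (card A) = qbinom ?Q (n - t - 2) (k - t - 2)"
  proof -
    have "real (card A) = qbinom ?Q (vec.dim (UNIV :: ('a ^ 'm) set) - vec.dim \<Gamma>) (k - t - 2)"
      unfolding A_def using Gs dU kt nk by (intro count_real) auto
    then show ?thesis using dU Gs by simp
  qed
  have cFH: "real (card (FH H)) = qbinom ?Q (Suc (n - t - 2)) (Suc (k - t - 2))" if "H \<in> Hyp" for H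
  proof -
    have H: "vec.subspace H" "vec.dim H = t + 2" using that by (auto simp: Hyp_iff)
    have "real (card (FH H)) = qbinom ?Q (vec.dim (UNIV :: ('a ^ 'm) set) - vec.dim H) (k - t - 1)"
      unfolding FH_def using H dU kt nk by (intro count_real) auto
    moreover have "vec.dim (UNIV :: ('a ^ 'm) set) - vec.dim H = Suc (n - t - 2)" using dU H kt nk by simp
    moreover have "k - t - 1 = Suc (k - t - 2)" using kt by simp
    ultimately show ?thesis by simp
  qed
  have cHyp: "real (card Hyp) = theta ?Q (t + 2)"
  proof -
    have "real (card Hyp) = qbinom ?Q (vec.dim \<Gamma> - vec.dim {0::'a^'m}) (t + 2)"
      unfolding Hyp_def using Gs by (intro count_real) (auto simp: vec.subspace_0)
    also have "\<dots> = qbinom ?Q (Suc (t + 2)) (t + 2)" using Gs by (simp add: numeral_eq_Suc)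
    also have "\<dots> = theta ?Q (t + 2)"
      using qbinom_hyp[of ?Q "t + 2"] card_field_ge2[where 'a='a] by (simp add: theta_def)
    finally show ?thesis .
  qed
  have cCH: "real (card (CH H)) = real (card (FH H)) - real (card A)" if "H \<in> Hyp" for H
    unfolding CH_def using AFH[OF that] fin by (simp add: card_Diff_subset of_nat_diff card_mono)
  have "card F = card A + card (\<Union>H\<in>Hyp. CH H)"
    unfolding FU by (rule card_Un_disjoint) (auto simp: fin CH_def)
  also have "card (\<Union>H\<in>Hyp. CH H) = (\<Sum>H\<in>Hyp. card (CH H))"
    by (rule card_UN_disjoint) (auto simp: fin disj)
  finally have "real (card F) = real (card A) + (\<Sum>H\<in>Hyp. real (card (CH H)))" by simp
  also have "(\<Sum>H\<in>Hyp. real (card (CH H))) = (\<Sum>H\<in>Hyp. qbinom ?Q (Suc (n - t - 2)) (Suc (k - t - 2)) - real (card A))"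
    by (rule sum.cong) (simp_all add: cCH cFH)
  also have "\<dots> = theta ?Q (t + 2) * (qbinom ?Q (Suc (n - t - 2)) (Suc (k - t - 2)) - real (card A))"
    using cHyp by simp
  finally have eq: "real (card F) = qbinom ?Q (n - t - 2) (k - t - 2) +
      theta ?Q (t + 2) * (qbinom ?Q (Suc (n - t - 2)) (Suc (k - t - 2)) - qbinom ?Q (n - t - 2) (k - t - 2))"
    using cA by simp
  define M where "M = n - t - 2"
  define r where "r = k - t - 2"
  have Mr: "r \<le> M" "n - k = M - r" "k - t - 1 = Suc r" using kt nk by (auto simp: M_def r_def)
  have Q2: "?Q \<ge> 2" using card_field_ge2[where 'a='a] by simp
  have nz: "?Q ^ Suc r - 1 \<noteq> 0"
  proof -
    have "?Q ^ Suc r \<ge> ?Q ^ 1" using Q2 by (intro power_increasing) auto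
    then have "?Q ^ Suc r \<ge> 2" using Q2 by (simp only: power_one_right)
    then show ?thesis by linarith
  qed
  have pw: "?Q ^ Suc M = ?Q ^ Suc r * ?Q ^ (M - r)" using Mr by (simp add: power_add[symmetric])
  have key: "(?Q ^ Suc M - 1) / (?Q ^ Suc r - 1) - 1 = ?Q ^ Suc r * (?Q ^ (M - r) - 1) / (?Q ^ Suc r - 1)"
    using nz pw by (simp add: field_simps)
  show ?thesis
    unfolding F_def[symmetric] eq qbinom_rec M_def[symmetric] r_def[symmetric] Mr
  proof -
    have "qbinom ?Q M r + theta ?Q (t + 2) * (qbinom ?Q M r * ((?Q ^ Suc M - 1) / (?Q ^ Suc r - 1)) - qbinom ?Q M r)
      = qbinom ?Q M r * (1 + theta ?Q (t + 2) * ((?Q ^ Suc M - 1) / (?Q ^ Suc r - 1) - 1))"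
      by (simp add: algebra_simps)
    also have "\<dots> = qbinom ?Q M r * (1 + theta ?Q (t + 2) * ?Q ^ Suc r * (?Q ^ (M - r) - 1) / (?Q ^ Suc r - 1))"
      unfolding key by simp
    finally show "qbinom ?Q M r + theta ?Q (t + 2) * (qbinom ?Q M r * ((?Q ^ Suc M - 1) / (?Q ^ Suc r - 1)) - qbinom ?Q M r)
      = qbinom ?Q M r * (1 + theta ?Q (t + 2) * ?Q ^ Suc r * (?Q ^ (M - r) - 1) / (?Q ^ Suc r - 1))" .
  qed
qed


theorem mainTheorem5:
  fixes \<Gamma> :: "('a::{finite,field} ^ 'm) set"
    and n k t :: nat
  assumes "CARD('m) = n + 1"
    and "k > t"
    and "n + t > 2 * k"
    and "pspace (t + 2) \<Gamma>"
  shows "maximal_t_intersecting k t {K. pspace k K \<and> meets_in_at_least (t + 1) K \<Gamma>}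
     \<and> (k \<ge> t + 2 \<longrightarrow>
        real (card {K. pspace k K \<and> meets_in_at_least (t + 1) K \<Gamma>}) =
          qbinom (real CARD('a)) (n - t - 2) (k - t - 2) *
          (1 + theta (real CARD('a)) (t + 2) * real CARD('a) ^ (k - t - 1) *
               (real CARD('a) ^ (n - k) - 1) / (real CARD('a) ^ (k - t - 1) - 1)))"
  using part_max[OF assms] part_count[OF assms(1) _ assms(3) assms(4)] by blast

end
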